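(* Let $G$ and $H$ be finite groups and $k$ a positive integer such that $\mu(H)\subseteq\mu(G)$ and $|\mu(G)\setminus\mu(H)|<k$. Then $\omega(G^k)=\omega(G^{k-1}\times H)$, where $G^m$ denotes the direct product of $m$ copies of $G$.
   Context: For a finite group $X$, $\omega(X)$ is the set of orders of elements of $X$, and $\mu(X)$ is the set of elements of $\omega(X)$ that are maximal with respect to divisibility. *)

theory Defs
  imports "HOL-Algebra.Algebra" "HOL-Algebra.Product_Groups"
begin

definition element_orders :: "('a, 'b) monoid_scheme \<Rightarrow> nat set" where
  "element_orders Y = group.ord Y ` carrier Y"

definition max_element_orders :: "('a, 'b) monoid_scheme \<Rightarrow> nat set" where
  "max_element_orders Y =
     {n \<in> element_orders Y. \<forall>m \<in> element_orders Y. n dvd m \<longrightarrow> m = n}"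

definition power_group :: "('a, 'b) monoid_scheme \<Rightarrow> nat \<Rightarrow> (nat \<Rightarrow> 'a) monoid" where
  "power_group G m = product_group {..<m} (\<lambda>_. G)"

end

theory Submission
  imports Defs
begin


lemma pow_DirProd: "(x,y) [^]\<^bsub>G \<times>\<times> H\<^esub> (n::nat) = (x [^]\<^bsub>G\<^esub> n, y [^]\<^bsub>H\<^esub> n)"
  by (induction n) simp_all

lemma pow_product_group:
  "f [^]\<^bsub>product_group I G\<^esub> (n::nat) = (if n = 0 then (\<lambda>i\<in>I. \<one>\<^bsub>G i\<^esub>) else (\<lambda>i\<in>I. f i [^]\<^bsub>G i\<^esub> n))"
proof (induction n)
  case 0 then show ?case by simp
next
  case (Suc n) then show ?case by (cases "n = 0") (simp_all add: restrict_def fun_eq_iff)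
qed


lemma ord_DirProd:
  assumes "group G" "group H" "x \<in> carrier G" "y \<in> carrier H"
  shows "group.ord (G \<times>\<times> H) (x,y) = lcm (group.ord G x) (group.ord H y)"
proof -
  interpret GH: group "G \<times>\<times> H" using assms DirProd_group by blast
  have "(x,y) [^]\<^bsub>G \<times>\<times> H\<^esub> n = \<one>\<^bsub>G \<times>\<times> H\<^esub> \<longleftrightarrow> lcm (group.ord G x) (group.ord H y) dvd n" for n
    unfolding pow_DirProd one_DirProd prod.inject lcm_least_iff
    using group.pow_eq_id[OF assms(1,3)] group.pow_eq_id[OF assms(2,4)] by blast
  then show ?thesis
    using assms by (subst GH.ord_unique) auto
qed


lemma ord_product_group:
  assumes "\<And>i. i \<in> I \<Longrightarrow> group (G i)" "f \<in> carrier (product_group I G)"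
  shows "group.ord (product_group I G) f = Lcm ((\<lambda>i. group.ord (G i) (f i)) ` I)"
proof -
  interpret P: group "product_group I G" by (rule product_group) (rule assms(1))
  have "f [^]\<^bsub>product_group I G\<^esub> n = \<one>\<^bsub>product_group I G\<^esub> \<longleftrightarrow> Lcm ((\<lambda>i. group.ord (G i) (f i)) ` I) dvd n" for n
  proof (cases "n = 0")
    case True then show ?thesis unfolding pow_product_group by simp
  next
    case False
    have "(\<lambda>i\<in>I. f i [^]\<^bsub>G i\<^esub> n) = (\<lambda>i\<in>I. \<one>\<^bsub>G i\<^esub>) \<longleftrightarrow> (\<forall>i\<in>I. f i [^]\<^bsub>G i\<^esub> n = \<one>\<^bsub>G i\<^esub>)"
      unfolding restrict_def fun_eq_iff by auto
    also have "\<dots> \<longleftrightarrow> (\<forall>i\<in>I. group.ord (G i) (f i) dvd n)"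
    proof -
      have "f i \<in> carrier (G i)" if "i \<in> I" for i using assms(2) that by (auto simp: PiE_iff)
      then show ?thesis using group.pow_eq_id[OF assms(1)] by blast
    qed
    also have "\<dots> \<longleftrightarrow> Lcm ((\<lambda>i. group.ord (G i) (f i)) ` I) dvd n"
      unfolding Lcm_dvd_iff by blast
    finally show ?thesis using False unfolding pow_product_group one_product_group by simp
  qed
  then show ?thesis
    using P.ord_unique[OF assms(2)] by blast
qed


lemma eo_DirProd:
  assumes "group G" "group H"
  shows "element_orders (G \<times>\<times> H) = {lcm a b | a b. a \<in> element_orders G \<and> b \<in> element_orders H}"
proof (intro equalityI subsetI)
  fix x assume "x \<in> element_orders (G \<times>\<times> H)"
  then obtain u v where uv: "u \<in> carrier G" "v \<in> carrier H" and x: "x = group.ord (G \<times>\<times> H) (u, v)"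
    unfolding element_orders_def by auto
  then show "x \<in> {lcm a b | a b. a \<in> element_orders G \<and> b \<in> element_orders H}"
    using ord_DirProd[OF assms uv] unfolding element_orders_def by blast
next
  fix x assume "x \<in> {lcm a b | a b. a \<in> element_orders G \<and> b \<in> element_orders H}"
  then obtain u v where uv: "u \<in> carrier G" "v \<in> carrier H" and x: "x = lcm (group.ord G u) (group.ord H v)"
    unfolding element_orders_def by auto
  then have "x = group.ord (G \<times>\<times> H) (u, v)" using ord_DirProd[OF assms uv] by simp
  then show "x \<in> element_orders (G \<times>\<times> H)"
    unfolding element_orders_def using uv by auto
qed

lemma eo_pos:
  assumes "group G" "finite (carrier G)" "n \<in> element_orders G"
  shows "n > 0"
  using assms group.ord_ge_1 unfolding element_orders_def by fastforce

lemma eo_dvd: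
  assumes "group G" "finite (carrier G)" "n \<in> element_orders G" "d dvd n"
  shows "d \<in> element_orders G"
proof -
  obtain x where x: "x \<in> carrier G" "n = group.ord G x" using assms(3) unfolding element_orders_def by blast
  have n0: "n > 0" using eo_pos assms by blast
  obtain e where e: "n = d * e" using assms(4) by blast
  have e0: "e \<noteq> 0" "d \<noteq> 0" using e n0 by auto
  have "group.ord G (x [^]\<^bsub>G\<^esub> e) = n div e"
  proof -
    have "e dvd group.ord G x" using e x by simp
    then show ?thesis using group.ord_pow[OF assms(1) x(1), of e] x e0 by simp
  qed
  also have "\<dots> = d" using e e0 by simp
  finally show ?thesis unfolding element_orders_def
    using x monoid.nat_pow_closed[OF group.is_monoid[OF assms(1)]] by (metis image_eqI)
qed

lemma eo_one: "group G \<Longrightarrow> 1 \<in> element_orders G"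
  unfolding element_orders_def by (metis group.ord_id image_eqI monoid.one_closed group.is_monoid)

lemma eo_finite: "finite (carrier G) \<Longrightarrow> finite (element_orders G)"
  unfolding element_orders_def by simp

lemma eo_max:
  assumes "group G" "finite (carrier G)" "a \<in> element_orders G"
  shows "\<exists>m\<in>max_element_orders G. a dvd m"
proof -
  define S where "S = {m \<in> element_orders G. a dvd m}"
  have fS: "finite S" using eo_finite[OF assms(2)] by (simp add: S_def)
  have aS: "a \<in> S" using assms(3) by (simp add: S_def)
  define M where "M = Max S"
  have MS: "M \<in> S" using Max_in[OF fS] aS unfolding M_def by blast
  have "M \<in> max_element_orders G"
    unfolding max_element_orders_def
  proof (intro CollectI conjI ballI impI)
    show "M \<in> element_orders G" using MS by (simp add: S_def)
    fix m assume m: "m \<in> element_orders G" "M dvd m"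
    then have "m \<in> S" using MS by (auto simp: S_def intro: dvd_trans)
    then have "m \<le> M" using fS by (simp add: M_def)
    moreover have "M \<le> m" using m eo_pos[OF assms(1,2) m(1)] by (simp add: dvd_imp_le)
    ultimately show "m = M" by simp
  qed
  then show ?thesis using MS by (auto simp: S_def)
qed


lemma eo_power':
  assumes "group G"
  shows "element_orders (power_group G m) = {Lcm (a ` {..<m}) | a. \<forall>i<m. a i \<in> element_orders G}"
proof (intro equalityI subsetI)
  fix x assume "x \<in> element_orders (power_group G m)"
  then obtain f where x: "x = group.ord (power_group G m) f" and f: "f \<in> carrier (power_group G m)"
    unfolding element_orders_def by (rule imageE)
  have x2: "x = Lcm ((\<lambda>i. group.ord G (f i)) ` {..<m})"
    using ord_product_group[of "{..<m}" "\<lambda>_. G" f, OF assms f[unfolded power_group_def]] x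
    unfolding power_group_def by simp
  have h: "\<forall>i<m. group.ord G (f i) \<in> element_orders G"
    using f unfolding element_orders_def power_group_def carrier_product_group PiE_iff by blast
  then show "x \<in> {Lcm (a ` {..<m}) | a. \<forall>i<m. a i \<in> element_orders G}"
    using x2 h by (intro CollectI exI[where x="\<lambda>i. group.ord G (f i)"] conjI) simp_all
next
  fix x assume "x \<in> {Lcm (a ` {..<m}) | a. \<forall>i<m. a i \<in> element_orders G}"
  then obtain a where a: "\<forall>i<m. a i \<in> element_orders G" and x: "x = Lcm (a ` {..<m})" by blast
  define g where "g i = (SOME y. y \<in> carrier G \<and> group.ord G y = a i)" for i
  have g: "g i \<in> carrier G \<and> group.ord G (g i) = a i" if "i < m" for i
  proof -
    have "a i \<in> group.ord G ` carrier G" using a that unfolding element_orders_def by simp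
    then obtain y where "a i = group.ord G y" "y \<in> carrier G" by (rule imageE)
    then have "\<exists>y. y \<in> carrier G \<and> group.ord G y = a i" by auto
    then show ?thesis unfolding g_def by (rule someI_ex)
  qed
  define f where "f = restrict g {..<m}"
  have f: "f \<in> carrier (product_group {..<m} (\<lambda>_. G))" 
    unfolding carrier_product_group f_def PiE_iff using g by simp
  have "group.ord (product_group {..<m} (\<lambda>_. G)) f = Lcm ((\<lambda>i. group.ord G (f i)) ` {..<m})"
    by (rule ord_product_group[of "{..<m}" "\<lambda>_. G" f, OF assms f])
  also have "(\<lambda>i. group.ord G (f i)) ` {..<m} = a ` {..<m}"
    by (rule image_cong) (simp_all add: f_def g)
  finally have eq: "group.ord (product_group {..<m} (\<lambda>_. G)) f = x" unfolding x .
  show "x \<in> element_orders (power_group G m)"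
    unfolding element_orders_def power_group_def by (rule image_eqI[where f="group.ord (product_group {..<m} (\<lambda>_. G))", OF eq[symmetric] f])
qed


lemma image_swap_last:
  assumes "j < Suc k"
  shows "c ` {..<Suc k} = insert (c j) ((c(j := c k)) ` {..<k})"
proof (intro equalityI subsetI)
  fix y assume "y \<in> c ` {..<Suc k}"
  then obtain i where i: "i < Suc k" "y = c i" by auto
  show "y \<in> insert (c j) ((c(j := c k)) ` {..<k})"
  proof (cases "i = j")
    case True then show ?thesis using i by simp
  next
    case False
    show ?thesis
    proof (cases "i = k")
      case True
      then have "j < k" using False assms by simp
      then show ?thesis using i True by (intro insertI2 image_eqI[where x=j]) auto
    next
      case False
      then have "i < k" using i by simp
      then show ?thesis using i \<open>i \<noteq> j\<close> by (intro insertI2 image_eqI[where x=i]) auto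
    qed
  qed
next
  fix y assume "y \<in> insert (c j) ((c(j := c k)) ` {..<k})"
  then show "y \<in> c ` {..<Suc k}"
    using assms by (auto split: if_splits)
qed

lemma comb_key:
  fixes c :: "nat \<Rightarrow> nat"
  assumes "\<forall>i<Suc k. c i \<in> W" "j < Suc k" "c j \<in> V"
  shows "Lcm (c ` {..<Suc k}) \<in> {lcm l b | l b. l \<in> {Lcm (a ` {..<k}) | a. \<forall>i<k. a i \<in> W} \<and> b \<in> V}"
proof -
  define a where "a = c(j := c k)"
  have aW: "\<forall>i<k. a i \<in> W" using assms(1) by (simp add: a_def)
  have "Lcm (c ` {..<Suc k}) = lcm (Lcm (a ` {..<k})) (c j)"
    unfolding image_swap_last[OF assms(2), of c] a_def by (simp add: lcm.commute)
  then show ?thesis using aW assms(3) by blast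
qed



theorem lemma3p1:
  fixes G :: "('a, 'c) monoid_scheme" and H :: "('b, 'd) monoid_scheme" and k :: nat
  assumes "group G" and "finite (carrier G)"
    and "group H" and "finite (carrier H)"
    and "k > 0"
    and "max_element_orders H \<subseteq> max_element_orders G"
    and "card (max_element_orders G - max_element_orders H) < k"
  shows "element_orders (power_group G k)
           = element_orders (power_group G (k - 1) \<times>\<times> H)"
proof -
  obtain k' where k: "k = Suc k'" using assms(5) gr0_implies_Suc by blast
  have muG: "max_element_orders G \<subseteq> element_orders G"
    by (auto simp: max_element_orders_def)
  have muH: "max_element_orders H \<subseteq> element_orders H"
    by (auto simp: max_element_orders_def)
  have HG: "element_orders H \<subseteq> element_orders G"
  proof
    fix b assume b: "b \<in> element_orders H"
    then obtain m where m: "m \<in> max_element_orders H" "b dvd m" using eo_max[OF assms(3,4)] by blast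
    then have "m \<in> element_orders G" using assms(6) muG by blast
    then show "b \<in> element_orders G" using eo_dvd[OF assms(1,2)] m(2) by blast
  qed
  have grpP: "group (power_group G k')"
    unfolding power_group_def by (rule product_group) (rule assms(1))
  let ?W = "element_orders G" and ?V = "element_orders H"
  have L: "element_orders (power_group G k) = {Lcm (a ` {..<Suc k'}) | a. \<forall>i<Suc k'. a i \<in> ?W}"
    unfolding k by (rule eo_power'[OF assms(1)])
  have R: "element_orders (power_group G (k - 1) \<times>\<times> H)
      = {lcm l b | l b. l \<in> {Lcm (a ` {..<k'}) | a. \<forall>i<k'. a i \<in> ?W} \<and> b \<in> ?V}"
    unfolding k diff_Suc_1 eo_DirProd[OF grpP assms(3)] eo_power'[OF assms(1)] ..
  show ?thesis
    unfolding L R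
  proof (intro equalityI subsetI)
    fix x assume "x \<in> {Lcm (a ` {..<Suc k'}) | a. \<forall>i<Suc k'. a i \<in> ?W}"
    then obtain a where a: "\<forall>i<Suc k'. a i \<in> ?W" and x: "x = Lcm (a ` {..<Suc k'})" by blast
    define m where "m i = (SOME n. n \<in> max_element_orders G \<and> a i dvd n)" for i
    have m: "m i \<in> max_element_orders G \<and> a i dvd m i" if "i < Suc k'" for i
    proof -
      have "\<exists>n. n \<in> max_element_orders G \<and> a i dvd n"
        using eo_max[OF assms(1,2)] a that by blast
      then show ?thesis unfolding m_def by (rule someI_ex)
    qed
    show "x \<in> {lcm l b | l b. l \<in> {Lcm (a ` {..<k'}) | a. \<forall>i<k'. a i \<in> ?W} \<and> b \<in> ?V}"
    proof (cases "\<exists>j<Suc k'. m j \<in> max_element_orders H")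
      case True
      then obtain j where j: "j < Suc k'" "m j \<in> max_element_orders H" by blast
      have "a j \<in> ?V" using eo_dvd[OF assms(3,4)] muH j m by blast
      then show ?thesis unfolding x using comb_key[OF a j(1)] by blast
    next
      case False
      then have mD: "m i \<in> max_element_orders G - max_element_orders H" if "i < Suc k'" for i
        using m that by blast
      have fin: "finite (max_element_orders G - max_element_orders H)"
        using eo_finite[OF assms(2)] muG by (meson finite_Diff finite_subset)
      have "\<not> inj_on m {..<Suc k'}"
      proof
        assume inj: "inj_on m {..<Suc k'}"
        have "card (m ` {..<Suc k'}) \<le> card (max_element_orders G - max_element_orders H)"
          by (rule card_mono[OF fin]) (use mD in auto)
        then show False using card_image[OF inj] assms(7) k by simp
      qed
      then obtain i j where ij: "i < Suc k'" "j < Suc k'" "i \<noteq> j" "m i = m j"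
        unfolding inj_on_def by blast
      define c where "c = a(i := lcm (a i) (a j), j := 1)"
      have "lcm (a i) (a j) dvd m i" using m[OF ij(1)] m[OF ij(2)] ij(4) by simp
      then have "lcm (a i) (a j) \<in> ?W" using eo_dvd[OF assms(1,2)] m ij(1) muG by blast
      then have cW: "\<forall>l<Suc k'. c l \<in> ?W" using a eo_one[OF assms(1)] by (simp add: c_def)
      have cj: "c j \<in> ?V" using eo_one[OF assms(3)] by (simp add: c_def)
      have "Lcm (c ` {..<Suc k'}) = Lcm (a ` {..<Suc k'})"
      proof (rule dvd_antisym)
        show "Lcm (c ` {..<Suc k'}) dvd Lcm (a ` {..<Suc k'})"
        proof (rule Lcm_least)
          fix y assume "y \<in> c ` {..<Suc k'}"
          then obtain l where l: "l < Suc k'" "y = c l" by auto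
          have ai: "a i dvd Lcm (a ` {..<Suc k'})" using ij by (intro dvd_Lcm) auto
          have aj: "a j dvd Lcm (a ` {..<Suc k'})" using ij by (intro dvd_Lcm) auto
          have al: "a l dvd Lcm (a ` {..<Suc k'})" using l by (intro dvd_Lcm) auto
          show "y dvd Lcm (a ` {..<Suc k'})"
            using ai aj al l ij(3) unfolding c_def by auto
        qed
      next
        show "Lcm (a ` {..<Suc k'}) dvd Lcm (c ` {..<Suc k'})"
        proof (rule Lcm_least)
          fix y assume "y \<in> a ` {..<Suc k'}"
          then obtain l where l: "l < Suc k'" "y = a l" by auto
          have ci: "c i dvd Lcm (c ` {..<Suc k'})" using ij by (intro dvd_Lcm) auto
          have cl: "c l dvd Lcm (c ` {..<Suc k'})" using l by (intro dvd_Lcm) auto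
          have "a l dvd c i \<or> a l = c l" using ij(3) unfolding c_def by auto
          then show "y dvd Lcm (c ` {..<Suc k'})"
            using ci cl l dvd_trans by metis
        qed
      qed
      then show ?thesis unfolding x using comb_key[OF cW ij(2) cj] by simp
    qed
  next
    fix x assume "x \<in> {lcm l b | l b. l \<in> {Lcm (a ` {..<k'}) | a. \<forall>i<k'. a i \<in> ?W} \<and> b \<in> ?V}"
    then obtain a b where a: "\<forall>i<k'. a i \<in> ?W" and b: "b \<in> ?V"
      and x: "x = lcm (Lcm (a ` {..<k'})) b" by blast
    define c where "c = a(k' := b)"
    have cW: "\<forall>i<Suc k'. c i \<in> ?W" using a b HG by (auto simp: c_def less_Suc_eq)
    have "c ` {..<Suc k'} = insert b (a ` {..<k'})"
      unfolding lessThan_Suc c_def by auto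
    then have "x = Lcm (c ` {..<Suc k'})" unfolding x by (simp add: lcm.commute)
    then show "x \<in> {Lcm (a ` {..<Suc k'}) | a. \<forall>i<Suc k'. a i \<in> ?W}" using cW by blast
  qed
qed

end
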